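(* Let $\bm{\mu}$ be the true mean vector, let $\delta\in(0,1)$ and $T^*=\log(1/\delta)/d_{s_0}(\bm{\mu})$. Suppose that at round $t$ (after every leaf has been drawn at least once) $\hat{\bm{\mu}}(t)=\bm{\mu}$, and the next leaf is selected by the ratio-based rule $I(t+1)\in\arg\max_{\ell\in\mathcal{L}(\mathcal{T})}w^{s_0}_\ell(\hat{\bm{\mu}}(t))/N_\ell(t)$ (the non-forced-exploration case of RD-Tracking-TMCTS). Then the selected leaf $\ell$ does not satisfy $N_\ell(t)>T^*w^{s_0}_\ell(\bm{\mu})$, unless $N_{\ell'}(t)>T^*w^{s_0}_{\ell'}(\bm{\mu})$ holds for all leaves $\ell'\in\mathcal{L}(\mathcal{T})$.
   Context: $\mathcal{T}$ is a finite rooted tree with node set $S$, root $s_0$, children $\mathcal{C}(s)$, leaves $\mathcal{L}(\mathcal{T})$, $\mathcal{D}(s)$ leaves descending from $s$; internal labels $L(s)\in\{\text{MAX},\text{MIN}\}$. $X\subseteq\mathbb{R}$ mean-parameter set of a one-parameter exponential family; $d(x,y)$ KL divergence; threshold $\theta\in X$. $V_s$ is the leaf mean at leaves and max/min of children's values at MAX/MIN nodes; $a_s=$'win' iff $V_s\ge\theta$. Recursive weights at a mean vector $\bm{\mu}$: $a^*=a_{s_0}(\bm{\mu})$; $P=$MAX, $Q=$MIN if $a^*=$'win', swapped if 'lose'. Leaf $s$: $w^s_s=1$, $d_s=d(\mu_s,\theta)$ if ($a^*=$'win', $\mu_s\ge\theta$) or ($a^*=$'lose', $\mu_s<\theta$),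 else $0$. $L(s)=P$: $d_s=\max_c d_c$, fixed $c^*(s)\in\arg\max_c d_c$, if $d_s>0$: $w^s=w^{c^*(s)}$ on $\mathcal{D}(c^*(s))$, $0$ elsewhere. $L(s)=Q$, all $d_c>0$: $d_s=(\sum_c1/d_c)^{-1}$, $w^s_\ell=\frac{w^c_\ell/d_c}{\sum_{c'}1/d_{c'}}$ on $\mathcal{D}(c)$. $L(s)=Q$ otherwise: $d_s=0$. Internal $s$ with $d_s=0$: $\bm{w}^s$ fixed arbitrary probability vector (the same fixed choices are used by the algorithm). $N_\ell(t)$ is the number of draws of leaf $\ell$ up to round $t$ and $\hat\mu_\ell(t)$ its empirical mean. *)

theory Defs
  imports "HOL-Probability.Probability"
begin

text \<open>A one-parameter (natural) exponential family generated by a base measure nu on the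
reals: densities exp(eta x - A(eta)) w.r.t. nu, where A is the log-partition function.\<close>

definition log_partition :: "real measure \<Rightarrow> real \<Rightarrow> real" where
  "log_partition \<nu> \<eta> = ln (enn2real (\<integral>\<^sup>+ x. ennreal (exp (\<eta> * x)) \<partial>\<nu>))"

definition nat_params :: "real measure \<Rightarrow> real set" where
  "nat_params \<nu> = interior {\<eta>. (\<integral>\<^sup>+ x. ennreal (exp (\<eta> * x)) \<partial>\<nu>) < \<infinity>}"

definition expfam_base :: "real measure \<Rightarrow> bool" where
  "expfam_base \<nu> \<longleftrightarrow> sets \<nu> = sets borel \<and> nat_params \<nu> \<noteq> {} \<and> (\<forall>c. \<not> (AE x in \<nu>. x = c))"

definition mean_params :: "real measure \<Rightarrow> real set" where
  "mean_params \<nu> = (\<lambda>\<eta>. deriv (log_partition \<nu>) \<eta>) ` nat_params \<nu>"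

definition nat_of_mean :: "real measure \<Rightarrow> real \<Rightarrow> real" where
  "nat_of_mean \<nu> x = (THE \<eta>. \<eta> \<in> nat_params \<nu> \<and> deriv (log_partition \<nu>) \<eta> = x)"

text \<open>KL divergence d(x,y) = KL(P_{eta(x)} || P_{eta(y)}) = A(eta_y) - A(eta_x) - x (eta_y - eta_x).\<close>
definition expfam_kl :: "real measure \<Rightarrow> real \<Rightarrow> real \<Rightarrow> real" where
  "expfam_kl \<nu> x y =
     (let \<eta>1 = nat_of_mean \<nu> x; \<eta>2 = nat_of_mean \<nu> y
      in log_partition \<nu> \<eta>2 - log_partition \<nu> \<eta>1 - x * (\<eta>2 - \<eta>1))"

datatype label = LMAX | LMIN

text \<open>A node is identified with the subtree rooted at it; leaves carry their identifiers.\<close>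
datatype 'l gtree = Leaf 'l | Node label "'l gtree list"

fun leaves :: "'l gtree \<Rightarrow> 'l list" where
  "leaves (Leaf l) = [l]"
| "leaves (Node L cs) = concat (map leaves cs)"

fun wf_gtree :: "'l gtree \<Rightarrow> bool" where
  "wf_gtree (Leaf l) = True"
| "wf_gtree (Node L cs) = (cs \<noteq> [] \<and> (\<forall>c\<in>set cs. wf_gtree c))"

definition game_tree :: "'l gtree \<Rightarrow> bool" where
  "game_tree t \<longleftrightarrow> wf_gtree t \<and> distinct (leaves t)"

fun subtrees :: "'l gtree \<Rightarrow> 'l gtree set" where
  "subtrees (Leaf l) = {Leaf l}"
| "subtrees (Node L cs) = insert (Node L cs) (\<Union> (subtrees ` set cs))"

fun val :: "('l \<Rightarrow> real) \<Rightarrow> 'l gtree \<Rightarrow> real" where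
  "val \<mu> (Leaf l) = \<mu> l"
| "val \<mu> (Node L cs) =
     (if L = LMAX then Max (set (map (val \<mu>) cs)) else Min (set (map (val \<mu>) cs)))"

definition win :: "real \<Rightarrow> ('l \<Rightarrow> real) \<Rightarrow> 'l gtree \<Rightarrow> bool" where
  "win \<theta> \<mu> t \<longleftrightarrow> val \<mu> t \<ge> \<theta>"

text \<open>Recursive complexities d_s; parameter w = (a^* = win), kl = d.
  A node label L equals P iff (L = LMAX) = w.\<close>
fun dv :: "(real \<Rightarrow> real \<Rightarrow> real) \<Rightarrow> real \<Rightarrow> bool \<Rightarrow> ('l \<Rightarrow> real) \<Rightarrow> 'l gtree \<Rightarrow> real" where
  "dv kl \<theta> w \<mu> (Leaf l) =
     (if (w \<and> \<mu> l \<ge> \<theta>) \<or> (\<not> w \<and> \<mu> l < \<theta>) then kl (\<mu> l) \<theta> else 0)"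
| "dv kl \<theta> w \<mu> (Node L cs) =
     (if (L = LMAX) = w then Max (set (map (dv kl \<theta> w \<mu>) cs))
      else if (\<forall>c\<in>set cs. dv kl \<theta> w \<mu> c > 0)
        then inverse (sum_list (map (\<lambda>c. 1 / dv kl \<theta> w \<mu> c) cs))
      else 0)"

lemma size_mem_lt: "x \<in> set cs \<Longrightarrow> size x < Suc (size_list size cs)"
  by (induction cs) auto

text \<open>Recursive weights w^s (a vector indexed by leaf identifiers, zero outside D(s)).
  cstar s is the index of the fixed maximizing child c^*(s) of a P-node s;
  wdef s is the fixed arbitrary probability vector used at internal nodes with d_s = 0.\<close>
function wv :: "(real \<Rightarrow> real \<Rightarrow> real) \<Rightarrow> real \<Rightarrow> bool \<Rightarrow> ('l gtree \<Rightarrow> nat) \<Rightarrow>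
    ('l gtree \<Rightarrow> 'l \<Rightarrow> real) \<Rightarrow> ('l \<Rightarrow> real) \<Rightarrow> 'l gtree \<Rightarrow> 'l \<Rightarrow> real" where
  "wv kl \<theta> w cstar wdef \<mu> (Leaf l) = (\<lambda>x. if x = l then 1 else 0)"
| "wv kl \<theta> w cstar wdef \<mu> (Node L cs) =
     (if dv kl \<theta> w \<mu> (Node L cs) = 0 then wdef (Node L cs)
      else if (L = LMAX) = w then
        (if cstar (Node L cs) < length cs
         then wv kl \<theta> w cstar wdef \<mu> (cs ! cstar (Node L cs)) else (\<lambda>x. 0))
      else (\<lambda>x. sum_list (map (\<lambda>c. wv kl \<theta> w cstar wdef \<mu> c x / dv kl \<theta> w \<mu> c) cs)
                 / sum_list (map (\<lambda>c. 1 / dv kl \<theta> w \<mu> c) cs)))"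
  by pat_completeness auto
termination
  by (relation "Wellfounded.measure (\<lambda>(_,_,_,_,_,_,t). size t)")
     (auto simp del: size_list_estimation' intro: size_mem_lt nth_mem)

definition valid_cstar :: "(real \<Rightarrow> real \<Rightarrow> real) \<Rightarrow> real \<Rightarrow> bool \<Rightarrow> ('l \<Rightarrow> real) \<Rightarrow>
    ('l gtree \<Rightarrow> nat) \<Rightarrow> 'l gtree \<Rightarrow> bool" where
  "valid_cstar kl \<theta> w \<mu> cstar t \<longleftrightarrow>
     (\<forall>L cs. Node L cs \<in> subtrees t \<longrightarrow> (L = LMAX) = w \<longrightarrow>
        cstar (Node L cs) < length cs \<and>
        dv kl \<theta> w \<mu> (cs ! cstar (Node L cs)) = dv kl \<theta> w \<mu> (Node L cs))"

definition valid_wdef :: "('l gtree \<Rightarrow> 'l \<Rightarrow> real) \<Rightarrow> 'l gtree \<Rightarrow> bool" where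
  "valid_wdef wdef t \<longleftrightarrow>
     (\<forall>L cs. Node L cs \<in> subtrees t \<longrightarrow>
        (\<forall>x. wdef (Node L cs) x \<ge> 0) \<and>
        (\<forall>x. x \<notin> set (leaves (Node L cs)) \<longrightarrow> wdef (Node L cs) x = 0) \<and>
        (\<Sum>x\<in>set (leaves (Node L cs)). wdef (Node L cs) x) = 1)"

definition d_root :: "real measure \<Rightarrow> real \<Rightarrow> ('l \<Rightarrow> real) \<Rightarrow> 'l gtree \<Rightarrow> real" where
  "d_root \<nu> \<theta> \<mu> t = dv (expfam_kl \<nu>) \<theta> (win \<theta> \<mu> t) \<mu> t"

definition w_root :: "real measure \<Rightarrow> real \<Rightarrow> ('l gtree \<Rightarrow> nat) \<Rightarrow> ('l gtree \<Rightarrow> 'l \<Rightarrow> real) \<Rightarrow>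
    ('l \<Rightarrow> real) \<Rightarrow> 'l gtree \<Rightarrow> 'l \<Rightarrow> real" where
  "w_root \<nu> \<theta> cstar wdef \<mu> t = wv (expfam_kl \<nu>) \<theta> (win \<theta> \<mu> t) cstar wdef \<mu> t"

end

theory Submission
  imports Defs
begin

lemma val_cong: "\<forall>l\<in>set (leaves s). \<mu> l = \<mu>' l \<Longrightarrow> val \<mu> s = val \<mu>' s"
proof (induction s)
  case (Leaf x) then show ?case by simp
next
  case (Node L cs)
  have "map (val \<mu>) cs = map (val \<mu>') cs"
    using Node by (auto intro!: map_cong)
  then show ?case by simp
qed

lemma dv_cong: "\<forall>l\<in>set (leaves s). \<mu> l = \<mu>' l \<Longrightarrow> dv kl \<theta> w \<mu> s = dv kl \<theta> w \<mu>' s"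
proof (induction s)
  case (Leaf x) then show ?case by simp
next
  case (Node L cs)
  have e: "\<And>c. c \<in> set cs \<Longrightarrow> dv kl \<theta> w \<mu> c = dv kl \<theta> w \<mu>' c"
    using Node by auto
  have m1: "map (dv kl \<theta> w \<mu>) cs = map (dv kl \<theta> w \<mu>') cs"
    using e by (auto intro!: map_cong)
  have m2: "map (\<lambda>c. 1 / dv kl \<theta> w \<mu> c) cs = map (\<lambda>c. 1 / dv kl \<theta> w \<mu>' c) cs"
    using e by (auto intro!: map_cong)
  have m3: "(\<forall>c\<in>set cs. dv kl \<theta> w \<mu> c > 0) = (\<forall>c\<in>set cs. dv kl \<theta> w \<mu>' c > 0)"
    using e by auto
  show ?case unfolding dv.simps m1 m2 m3 ..
qed

lemma wv_cong: "\<forall>l\<in>set (leaves s). \<mu> l = \<mu>' l \<Longrightarrow>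
   wv kl \<theta> w cstar wdef \<mu> s = wv kl \<theta> w cstar wdef \<mu>' s"
proof (induction kl \<theta> w cstar wdef \<mu> s rule: wv.induct)
  case (1 kl \<theta> w cstar wdef \<mu> l) then show ?case by simp
next
  case (2 kl \<theta> w cstar wdef \<mu> L cs)
  have e: "\<And>c. c \<in> set cs \<Longrightarrow> dv kl \<theta> w \<mu> c = dv kl \<theta> w \<mu>' c"
    using 2(3) by (intro dv_cong) auto
  have e0: "dv kl \<theta> w \<mu> (Node L cs) = dv kl \<theta> w \<mu>' (Node L cs)"
    using 2(3) by (intro dv_cong) auto
  show ?case
  proof (cases "dv kl \<theta> w \<mu> (Node L cs) = 0")
    case True then show ?thesis using e0 by simp
  next
    case F: False
    show ?thesis
    proof (cases "(L = LMAX) = w")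
      case True
      show ?thesis
      proof (cases "cstar (Node L cs) < length cs")
        case c: True
        have "wv kl \<theta> w cstar wdef \<mu> (cs ! cstar (Node L cs)) = wv kl \<theta> w cstar wdef \<mu>' (cs ! cstar (Node L cs))"
        proof (rule 2(1)[OF F True c])
          have "cs ! cstar (Node L cs) \<in> set cs" using c by simp
          then have "set (leaves (cs ! cstar (Node L cs))) \<subseteq> set (leaves (Node L cs))" by auto
          then show "\<forall>l\<in>set (leaves (cs ! cstar (Node L cs))). \<mu> l = \<mu>' l" using 2(3) by blast
        qed
        then show ?thesis using F e0 True c by simp
      qed (use F e0 True in simp)
    next
      case False
      have "\<And>c. c \<in> set cs \<Longrightarrow> wv kl \<theta> w cstar wdef \<mu> c = wv kl \<theta> w cstar wdef \<mu>' c"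
        using 2(2)[OF F False] 2(3) by auto
      then have m1: "\<And>x. map (\<lambda>c. wv kl \<theta> w cstar wdef \<mu> c x / dv kl \<theta> w \<mu> c) cs
                  = map (\<lambda>c. wv kl \<theta> w cstar wdef \<mu>' c x / dv kl \<theta> w \<mu>' c) cs"
        using e by (auto intro!: map_cong)
      have m2: "map (\<lambda>c. 1 / dv kl \<theta> w \<mu> c) cs = map (\<lambda>c. 1 / dv kl \<theta> w \<mu>' c) cs"
        using e by (auto intro!: map_cong)
      have F': "dv kl \<theta> w \<mu>' (Node L cs) \<noteq> 0" using F e0 by simp
      have "wv kl \<theta> w cstar wdef \<mu> (Node L cs) = (\<lambda>x. sum_list (map (\<lambda>c. wv kl \<theta> w cstar wdef \<mu> c x / dv kl \<theta> w \<mu> c) cs)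
                 / sum_list (map (\<lambda>c. 1 / dv kl \<theta> w \<mu> c) cs))" using F False by simp
      also have "\<dots> = (\<lambda>x. sum_list (map (\<lambda>c. wv kl \<theta> w cstar wdef \<mu>' c x / dv kl \<theta> w \<mu>' c) cs)
                 / sum_list (map (\<lambda>c. 1 / dv kl \<theta> w \<mu>' c) cs))" by (simp only: m1 m2)
      also have "\<dots> = wv kl \<theta> w cstar wdef \<mu>' (Node L cs)" using F' False by simp
      finally show ?thesis .
    qed
  qed
qed

lemma valid_wdef_sub: "valid_wdef wdef (Node L cs) \<Longrightarrow> c \<in> set cs \<Longrightarrow> valid_wdef wdef c"
proof -
  assume a: "valid_wdef wdef (Node L cs)" "c \<in> set cs"
  have "subtrees c \<subseteq> subtrees (Node L cs)" using a(2) by auto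
  then show ?thesis using a(1) unfolding valid_wdef_def by blast
qed

lemma valid_wdef_self: "valid_wdef wdef (Node L cs) \<Longrightarrow> wdef (Node L cs) x \<ge> 0"
  unfolding valid_wdef_def by auto

lemma wv_nonneg: "valid_wdef wdef s \<Longrightarrow> wv kl \<theta> w cstar wdef \<mu> s x \<ge> 0"
proof (induction kl \<theta> w cstar wdef \<mu> s arbitrary: x rule: wv.induct)
  case (1 kl \<theta> w cstar wdef \<mu> l) then show ?case by simp
next
  case (2 kl \<theta> w cstar wdef \<mu> L cs)
  show ?case
  proof (cases "dv kl \<theta> w \<mu> (Node L cs) = 0")
    case True then show ?thesis using valid_wdef_self[OF 2(3)] by simp
  next
    case F: False
    show ?thesis
    proof (cases "(L = LMAX) = w")
      case True
      show ?thesis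
      proof (cases "cstar (Node L cs) < length cs")
        case c: True
        have "wv kl \<theta> w cstar wdef \<mu> (cs ! cstar (Node L cs)) x \<ge> 0"
          using 2(1)[OF F True c] valid_wdef_sub[OF 2(3)] c by simp
        then show ?thesis using F True c by simp
      qed (use F True in simp)
    next
      case False
      then have pos: "\<forall>c\<in>set cs. dv kl \<theta> w \<mu> c > 0" using F
      proof -
        have "dv kl \<theta> w \<mu> (Node L cs) = (if (\<forall>c\<in>set cs. dv kl \<theta> w \<mu> c > 0)
          then inverse (sum_list (map (\<lambda>c. 1 / dv kl \<theta> w \<mu> c) cs)) else 0)" using False by simp
        then show ?thesis using F by presburger
      qed
      have "\<And>c. c \<in> set cs \<Longrightarrow> wv kl \<theta> w cstar wdef \<mu> c x \<ge> 0"
        using 2(2)[OF F False] valid_wdef_sub[OF 2(3)] by auto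
      then have "sum_list (map (\<lambda>c. wv kl \<theta> w cstar wdef \<mu> c x / dv kl \<theta> w \<mu> c) cs) \<ge> 0"
        using pos by (intro sum_list_nonneg) auto
      moreover have "sum_list (map (\<lambda>c. 1 / dv kl \<theta> w \<mu> c) cs) \<ge> 0"
        using pos by (intro sum_list_nonneg) auto
      ultimately show ?thesis using F False by simp
    qed
  qed
qed

theorem lemma1:
  fixes \<nu> :: "real measure" and t :: "'l gtree" and \<theta> \<delta> :: real
    and \<mu> \<mu>hat :: "'l \<Rightarrow> real" and N :: "'l \<Rightarrow> nat" and lsel :: 'l
    and cstar :: "'l gtree \<Rightarrow> nat" and wdef :: "'l gtree \<Rightarrow> 'l \<Rightarrow> real"
  assumes fam: "expfam_base \<nu>"
    and tree: "game_tree t"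
    and theta: "\<theta> \<in> mean_params \<nu>"
    and means: "\<forall>l\<in>set (leaves t). \<mu> l \<in> mean_params \<nu>"
    and cstar: "valid_cstar (expfam_kl \<nu>) \<theta> (win \<theta> \<mu>hat t) \<mu>hat cstar t"
    and wdef: "valid_wdef wdef t"
    and delta: "0 < \<delta>" "\<delta> < 1"
    and drawn: "\<forall>l\<in>set (leaves t). N l \<ge> 1"
    and emp: "\<forall>l\<in>set (leaves t). \<mu>hat l = \<mu> l"
    and sel: "lsel \<in> set (leaves t)"
    and ratio: "\<forall>l'\<in>set (leaves t).
        w_root \<nu> \<theta> cstar wdef \<mu>hat t l' / real (N l') \<le> w_root \<nu> \<theta> cstar wdef \<mu>hat t lsel / real (N lsel)"
  shows "let Tstar = ln (1 / \<delta>) / d_root \<nu> \<theta> \<mu> t in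
         real (N lsel) > Tstar * w_root \<nu> \<theta> cstar wdef \<mu> t lsel \<longrightarrow>
         (\<forall>l'\<in>set (leaves t). real (N l') > Tstar * w_root \<nu> \<theta> cstar wdef \<mu> t l')"
proof -
  define W where "W = w_root \<nu> \<theta> cstar wdef \<mu> t"
  define c where "c = ln (1 / \<delta>) / d_root \<nu> \<theta> \<mu> t"
  have winq: "win \<theta> \<mu>hat t = win \<theta> \<mu> t"
    unfolding win_def using val_cong[OF emp] by simp
  have Weq: "w_root \<nu> \<theta> cstar wdef \<mu>hat t = W"
    unfolding W_def w_root_def winq using wv_cong[OF emp] by simp
  have ratio': "\<forall>l'\<in>set (leaves t). W l' / real (N l') \<le> W lsel / real (N lsel)"
    using ratio Weq by simp
  have goal: "\<forall>l'\<in>set (leaves t). real (N l') > c * W l'" if hs: "real (N lsel) > c * W lsel"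
  proof
    fix l' assume l': "l' \<in> set (leaves t)"
    have Npos: "real (N l') \<ge> 1" using drawn l' by simp
    have Wnn: "W l' \<ge> 0" unfolding W_def w_root_def by (rule wv_nonneg[OF wdef])
    show "real (N l') > c * W l'"
    proof (cases "c > 0")
      case False
      then have "c * W l' \<le> 0" using Wnn by (simp add: mult_nonpos_nonneg)
      then show ?thesis using Npos by linarith
    next
      case cp: True
      show ?thesis
      proof (rule ccontr)
        assume "\<not> ?thesis"
        then have le: "real (N l') \<le> c * W l'" by simp
        have Ns: "real (N lsel) \<ge> 1" using drawn sel by simp
        have a: "1 / c \<le> W l' / real (N l')" using le Npos cp
          by (simp add: field_simps)
        have b: "W lsel / real (N lsel) < 1 / c" using hs Ns cp
          by (simp add: field_simps)
        show False using a b ratio' l' by fastforce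
      qed
    qed
  qed
  show ?thesis unfolding Let_def using goal unfolding c_def W_def by blast
qed

end
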